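(* Let $S$ be a monoid in which the unique maximal right ideal $\mathfrak{M}$ is a two-sided ideal. Let $A$ be a finitely generated quasi-strongly faithful right $S$-act with a unique zero element $\theta$. If $AI=A$ for some proper right ideal $I$ of $S$, then $A=\{\theta\}$.
   Context: $S$ is a monoid with identity $1$ having at least one right non-invertible element. A (right) $S$-act is a nonempty set $A$ with a map $A\times S\to A$, $(a,s)\mapsto as$, such that $a1=a$ and $a(st)=(as)t$ for all $a\in A$, $s,t\in S$. An element $\theta\in A$ is a zero if $\theta s=\theta$ for all $s\in S$. $\mathfrak{M}=\{s\in S \mid st\neq 1 \text{ for all } t\in S\}$ is the set of right non-invertible elements; it is the unique maximal right ideal of $S$, and every proper right ideal is contained in it. For a right ideal $I$, $AI=\{as\mid a\in A,\ s\in I\}$. $A$ is finitely generated if there is a finite $X\subseteq A$ with $A=\bigcup_{x\in X}xS$. An $S$-act $A$ is called quasi-strongly faithful if for $a\in A$ and $s\in S$, the equality $as=a$ implies $s\notin\mathfrak{M}$ (when $A$ has a unique zero $\theta$, this is required only for $a\neq\theta$). *)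

theory Defs
  imports Main
begin

definition right_act :: "'a set \<Rightarrow> ('a \<Rightarrow> 's::monoid_mult \<Rightarrow> 'a) \<Rightarrow> bool" where
  "right_act A act \<longleftrightarrow> A \<noteq> {} \<and> (\<forall>a\<in>A. \<forall>s. act a s \<in> A)
     \<and> (\<forall>a\<in>A. act a 1 = a) \<and> (\<forall>a\<in>A. \<forall>s t. act a (s * t) = act (act a s) t)"

definition right_noninv :: "'s::monoid_mult set" where
  "right_noninv = {s. \<forall>t. s * t \<noteq> 1}"

definition right_ideal :: "'s::monoid_mult set \<Rightarrow> bool" where
  "right_ideal I \<longleftrightarrow> I \<noteq> {} \<and> (\<forall>s\<in>I. \<forall>t. s * t \<in> I)"

definition left_ideal :: "'s::monoid_mult set \<Rightarrow> bool" where
  "left_ideal I \<longleftrightarrow> I \<noteq> {} \<and> (\<forall>s\<in>I. \<forall>t. t * s \<in> I)"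

definition two_sided_ideal :: "'s::monoid_mult set \<Rightarrow> bool" where
  "two_sided_ideal I \<longleftrightarrow> right_ideal I \<and> left_ideal I"

definition is_zero :: "'a set \<Rightarrow> ('a \<Rightarrow> 's \<Rightarrow> 'a) \<Rightarrow> 'a \<Rightarrow> bool" where
  "is_zero A act z \<longleftrightarrow> z \<in> A \<and> (\<forall>s. act z s = z)"

definition act_ideal :: "'a set \<Rightarrow> ('a \<Rightarrow> 's \<Rightarrow> 'a) \<Rightarrow> 's set \<Rightarrow> 'a set" where
  "act_ideal A act I = {act a s | a s. a \<in> A \<and> s \<in> I}"

definition fin_gen :: "'a set \<Rightarrow> ('a \<Rightarrow> 's \<Rightarrow> 'a) \<Rightarrow> bool" where
  "fin_gen A act \<longleftrightarrow> (\<exists>X. finite X \<and> X \<subseteq> A \<and> A = (\<Union>x\<in>X. {act x s | s. True}))"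

definition quasi_strongly_faithful_zero ::
  "'a set \<Rightarrow> ('a \<Rightarrow> 's::monoid_mult \<Rightarrow> 'a) \<Rightarrow> 'a \<Rightarrow> bool" where
  "quasi_strongly_faithful_zero A act z \<longleftrightarrow>
     (\<forall>a\<in>A. \<forall>s. a \<noteq> z \<and> act a s = a \<longrightarrow> s \<notin> right_noninv)"

end

theory Submission
  imports Defs
begin

lemma finite_cycle:
  assumes "finite X" "X \<noteq> {}" "\<forall>x\<in>X. \<exists>y\<in>X. R x y"
    and "\<forall>x y z. R x y \<longrightarrow> R y z \<longrightarrow> R x z"
  shows "\<exists>x\<in>X. R x x"
proof (rule ccontr)
  assume nc: "\<not> (\<exists>x\<in>X. R x x)"
  define r where "r = {(y,x). x \<in> X \<and> y \<in> X \<and> R x y}"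
  have fin: "finite r" unfolding r_def
    by (rule finite_subset[of _ "X \<times> X"]) (auto simp: assms(1))
  have tr: "trans r" unfolding r_def trans_def using assms(4) by blast
  have "acyclic r" unfolding acyclic_def trancl_id[OF tr] using nc unfolding r_def by blast
  hence wf: "wf r" using finite_acyclic_wf fin by blast
  obtain z where "z \<in> X" "\<forall>y. (y,z) \<in> r \<longrightarrow> y \<notin> X"
    using wfE_min[OF wf, of _ X] assms(2) by blast
  then show False using assms(3) unfolding r_def by blast
qed

theorem theorem2p11:
  fixes A :: "'a set" and act :: "'a \<Rightarrow> 's::monoid_mult \<Rightarrow> 'a" and \<theta> :: 'a
    and I :: "'s set"
  assumes "\<exists>s::'s. s \<in> right_noninv"
    and "two_sided_ideal (right_noninv :: 's set)"
    and "right_act A act"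
    and "fin_gen A act"
    and "is_zero A act \<theta>"
    and "\<forall>z. is_zero A act z \<longrightarrow> z = \<theta>"
    and "quasi_strongly_faithful_zero A act \<theta>"
    and "right_ideal I" and "I \<noteq> UNIV"
    and "act_ideal A act I = A"
  shows "A = {\<theta>}"
proof -
  let ?M = "right_noninv :: 's set"
  have IM: "I \<subseteq> ?M"
  proof
    fix s assume s: "s \<in> I"
    show "s \<in> ?M" unfolding right_noninv_def
    proof (clarsimp)
      fix t assume "s * t = 1"
      then have "1 \<in> I" using s assms(8) unfolding right_ideal_def by metis
      then have "\<forall>u. u \<in> I" using assms(8) unfolding right_ideal_def by (metis mult_1)
      then show False using assms(9) by blast
    qed
  qed
  have Mr: "\<And>m t. m \<in> ?M \<Longrightarrow> m * t \<in> ?M" and Ml: "\<And>m t. m \<in> ?M \<Longrightarrow> t * m \<in> ?M"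
    using assms(2) unfolding two_sided_ideal_def right_ideal_def left_ideal_def by blast+
  have ra: "A \<noteq> {}" "\<And>a s. a \<in> A \<Longrightarrow> act a s \<in> A" "\<And>a. a \<in> A \<Longrightarrow> act a 1 = a"
    "\<And>a s t. a \<in> A \<Longrightarrow> act a (s * t) = act (act a s) t"
    using assms(3) unfolding right_act_def by blast+
  have th: "\<theta> \<in> A" "\<And>s. act \<theta> s = \<theta>" using assms(5) unfolding is_zero_def by blast+
  obtain X where X: "finite X" "X \<subseteq> A" "A = (\<Union>x\<in>X. {act x s | s. True})"
    using assms(4) unfolding fin_gen_def by blast
  define X0 where "X0 = {x\<in>X. x \<noteq> \<theta>}"
  define R where "R = (\<lambda>x y. \<exists>m\<in>?M. y \<in> A \<and> x = act y m)"
  have "X0 = {}"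
  proof (rule ccontr)
    assume ne: "X0 \<noteq> {}"
    have succ: "\<forall>x\<in>X0. \<exists>y\<in>X0. R x y"
    proof
      fix x assume x: "x \<in> X0"
      then have "x \<in> A" using X X0_def by blast
      then have "x \<in> act_ideal A act I" using assms(10) by simp
      then obtain y i where y: "y \<in> A" "i \<in> I" "x = act y i" unfolding act_ideal_def by blast
      then obtain x' s where x': "x' \<in> X" "y = act x' s" using X by blast
      have xA: "x' \<in> A" using x' X by blast
      have e: "x = act x' (s * i)" using y x' ra(4)[OF xA] by simp
      have m: "s * i \<in> ?M" using Ml IM y by blast
      have "x' \<noteq> \<theta>" using e th x X0_def by auto
      then show "\<exists>y\<in>X0. R x y" using x' e m xA unfolding X0_def R_def by blast
    qed
    have trR: "\<forall>x y z. R x y \<longrightarrow> R y z \<longrightarrow> R x z"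
      unfolding R_def using Mr ra(4) by metis
    obtain x where "x \<in> X0" "R x x"
      using finite_cycle[OF _ ne succ trR] X(1) X0_def by auto
    then show False using assms(7) unfolding R_def X0_def quasi_strongly_faithful_zero_def by (metis (mono_tags, lifting) mem_Collect_eq)
  qed
  then have "X \<subseteq> {\<theta>}" unfolding X0_def by blast
  then show ?thesis using X(3) th ra(1) by auto
qed

end
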